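(* Suppose the system is DFS$_m$, and define $V:\mathbb{R}^n\to\mathbb{R}$ by $$V(x_0)=\inf_{\Psi\in\mathcal{C}^d_m}\ \sup_{\sigma\in\Sigma^\omega}\ \sum_{k=0}^{\infty}\|\phi(k,\sigma,x_0,\Psi)\|,$$ where $\mathcal{C}^d_m$ is the set of all functions $\mathcal{H}\to\mathbb{R}^m$. Then $V$ is a norm on $\mathbb{R}^n$, it satisfies $$V(x)=\|x\|+\max_{i\in\Sigma}\min_{u\in\mathbb{R}^m}V(A_ix+B_iu)\quad\text{for all }x\in\mathbb{R}^n$$ (the minima being attained), and any $\Phi_d:\Sigma\times\mathbb{R}^n\to\mathbb{R}^m$ with $\Phi_d(i,x)\in\arg\min_{u\in\mathbb{R}^m}V(A_ix+B_iu)$ for all $i\in\Sigma$, $x\in\mathbb{R}^n$ makes the closed loop $x(k+1)=A_{\sigma(k)}x(k)+B_{\sigma(k)}\Phi_d(\sigma(k),x(k))$ uniformly exponentially stable, with $V$ as a Lyapunov function: there exists $\tilde\gamma\in[0,1)$ with $V(A_ix+B_i\Phi_d(i,x))\le\tilde\gamma V(x)$ for all $i\in\Sigma$, $x\in\mathbb{R}^n$.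
   Context: Let $\Sigma$ be a finite nonempty set and $\{(A_i,B_i)\in\mathbb{R}^{n\times n}\times\mathbb{R}^{n\times m} : i\in\Sigma\}$. Consider $x(k+1)=A_{\sigma(k)}x(k)+B_{\sigma(k)}u(k)$, $k\in\mathbb{N}=\{0,1,\dots\}$, with arbitrary switching signal $\sigma:\mathbb{N}\to\Sigma$ (set of all such: $\Sigma^\omega$). $\|\cdot\|$ is the Euclidean norm. $\mathcal{H}$ is the set of all tuples $(x_k,\dots,x_0;\,i_k,\dots,i_0)$ with $k\in\mathbb{N}$, $x_j\in\mathbb{R}^n$, $i_j\in\Sigma$. For a function $\Psi:\mathcal{H}\to\mathbb{R}^m$ (a current-mode-dependent controller with memory), $\phi(k,\sigma,x_0,\Psi)$ denotes the closed-loop trajectory defined by $x(0)=x_0$ and $x(k+1)=A_{\sigma(k)}x(k)+B_{\sigma(k)}\Psi(x(k),\dots,x(0);\,\sigma(k),\dots,\sigma(0))$. The system is DFS$_m$ if there exist such $\Psi$ and constants $M>0,\gamma\in[0,1)$ with $\|\phi(k,\sigma,x_0,\Psi)\|\le M\gamma^k\|x_0\|$ for all $x_0\in\mathbb{R}^n,\sigma\in\Sigma^\omega,k\in\mathbb{N}$. A closed loop is uniformly exponentially stable if there exist $M>0,\gamma\in[0,1)$ with $\|x(k)\|\le M\gamma^k\|x(0)\|$ for all initial states, all $\sigma\in\Sigma^\omega$ and all $k\in\mathbb{N}$. *)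

theory Defs
  imports "HOL-Analysis.Analysis"
begin

text \<open>A controller with memory Psi takes the history (x_k,...,x_0; i_k,...,i_0),
  encoded as two lists with the newest entry first.\<close>

fun hist_traj ::
  "('s \<Rightarrow> real^'n^'n) \<Rightarrow> ('s \<Rightarrow> real^'m^'n)
   \<Rightarrow> ((real^'n) list \<Rightarrow> 's list \<Rightarrow> real^'m)
   \<Rightarrow> (nat \<Rightarrow> 's) \<Rightarrow> real^'n \<Rightarrow> nat \<Rightarrow> (real^'n) list" where
  "hist_traj A B Psi \<sigma> x0 0 = [x0]"
| "hist_traj A B Psi \<sigma> x0 (Suc k) =
     (let h = hist_traj A B Psi \<sigma> x0 k
      in (A (\<sigma> k) *v hd h + B (\<sigma> k) *v Psi h (map \<sigma> (rev [0..<Suc k]))) # h)"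

definition phi ::
  "('s \<Rightarrow> real^'n^'n) \<Rightarrow> ('s \<Rightarrow> real^'m^'n) \<Rightarrow> nat \<Rightarrow> (nat \<Rightarrow> 's) \<Rightarrow> real^'n
   \<Rightarrow> ((real^'n) list \<Rightarrow> 's list \<Rightarrow> real^'m) \<Rightarrow> real^'n" where
  "phi A B k \<sigma> x0 Psi = hd (hist_traj A B Psi \<sigma> x0 k)"

definition DFS_m :: "('s \<Rightarrow> real^'n^'n) \<Rightarrow> ('s \<Rightarrow> real^'m^'n) \<Rightarrow> bool" where
  "DFS_m A B \<longleftrightarrow> (\<exists>Psi M \<gamma>. M > 0 \<and> 0 \<le> \<gamma> \<and> \<gamma> < 1 \<and>
     (\<forall>x0 \<sigma> k. norm (phi A B k \<sigma> x0 Psi) \<le> M * \<gamma> ^ k * norm x0))"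

definition V_enn :: "('s \<Rightarrow> real^'n^'n) \<Rightarrow> ('s \<Rightarrow> real^'m^'n) \<Rightarrow> real^'n \<Rightarrow> ennreal" where
  "V_enn A B x0 = (INF Psi. SUP \<sigma>. (\<Sum>k. ennreal (norm (phi A B k \<sigma> x0 Psi))))"

definition V :: "('s \<Rightarrow> real^'n^'n) \<Rightarrow> ('s \<Rightarrow> real^'m^'n) \<Rightarrow> real^'n \<Rightarrow> real" where
  "V A B x0 = enn2real (V_enn A B x0)"

definition is_norm :: "(real^'n \<Rightarrow> real) \<Rightarrow> bool" where
  "is_norm f \<longleftrightarrow> (\<forall>x. f x \<ge> 0) \<and> (\<forall>x. f x = 0 \<longleftrightarrow> x = 0) \<and>
     (\<forall>c x. f (c *\<^sub>R x) = \<bar>c\<bar> * f x) \<and> (\<forall>x y. f (x + y) \<le> f x + f y)"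

fun cl_traj :: "('s \<Rightarrow> real^'n^'n) \<Rightarrow> ('s \<Rightarrow> real^'m^'n) \<Rightarrow> ('s \<Rightarrow> real^'n \<Rightarrow> real^'m)
   \<Rightarrow> (nat \<Rightarrow> 's) \<Rightarrow> real^'n \<Rightarrow> nat \<Rightarrow> real^'n" where
  "cl_traj A B Phi \<sigma> x0 0 = x0"
| "cl_traj A B Phi \<sigma> x0 (Suc k) =
     A (\<sigma> k) *v cl_traj A B Phi \<sigma> x0 k + B (\<sigma> k) *v Phi (\<sigma> k) (cl_traj A B Phi \<sigma> x0 k)"

definition UES :: "('s \<Rightarrow> real^'n^'n) \<Rightarrow> ('s \<Rightarrow> real^'m^'n) \<Rightarrow> ('s \<Rightarrow> real^'n \<Rightarrow> real^'m) \<Rightarrow> bool" where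
  "UES A B Phi \<longleftrightarrow> (\<exists>M \<gamma>. M > 0 \<and> 0 \<le> \<gamma> \<and> \<gamma> < 1 \<and>
     (\<forall>x0 \<sigma> k. norm (cl_traj A B Phi \<sigma> x0 k) \<le> M * \<gamma> ^ k * norm x0))"

end

theory Submission
  imports Defs
begin


fun tr :: "('s \<Rightarrow> real^'n^'n) \<Rightarrow> ('s \<Rightarrow> real^'m^'n) \<Rightarrow> ('s list \<Rightarrow> real^'m)
   \<Rightarrow> (nat \<Rightarrow> 's) \<Rightarrow> real^'n \<Rightarrow> nat \<Rightarrow> real^'n" where
  "tr A B U \<sigma> x 0 = x"
| "tr A B U \<sigma> x (Suc k) = A (\<sigma> k) *v tr A B U \<sigma> x k + B (\<sigma> k) *v U (map \<sigma> [0..<Suc k])"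

definition SS where "SS A B U \<sigma> x = (\<Sum>k. ennreal (norm (tr A B U \<sigma> x k)))"
definition JJ where "JJ A B U x = (SUP \<sigma>. SS A B U \<sigma> x)"
definition WW where "WW A B x = (INF U. JJ A B U x)"

lemma phi_Suc: "phi A B (Suc k) \<sigma> x Psi = A (\<sigma> k) *v phi A B k \<sigma> x Psi
   + B (\<sigma> k) *v Psi (hist_traj A B Psi \<sigma> x k) (map \<sigma> (rev [0..<Suc k]))"
  by (simp add: phi_def Let_def)

lemma phi_0: "phi A B 0 \<sigma> x Psi = x"
  by (simp add: phi_def)

lemma hist_cong: "(\<forall>j<k. \<sigma> j = \<sigma>' j) \<Longrightarrow> hist_traj A B Psi \<sigma> x k = hist_traj A B Psi \<sigma>' x k"
proof (induction k)
  case 0 then show ?case by simp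
next
  case (Suc k)
  have m: "map \<sigma> (rev [0..<Suc k]) = map \<sigma>' (rev [0..<Suc k])"
    using Suc.prems by (auto simp del: upt_Suc)
  have h: "hist_traj A B Psi \<sigma> x k = hist_traj A B Psi \<sigma>' x k" using Suc by auto
  have sk: "\<sigma> k = \<sigma>' k" using Suc.prems by auto
  show ?case by (simp only: hist_traj.simps Let_def h m sk)
qed

lemma phi_from_U: "phi A B k \<sigma> x (\<lambda>h s. U (rev s)) = tr A B U \<sigma> x k"
  by (induction k) (simp_all add: phi_0 phi_Suc rev_map del: upt_Suc)

lemma U_from_phi:
  "\<exists>U. \<forall>k \<sigma>. tr A B U \<sigma> x k = phi A B k \<sigma> x Psi"
proof -
  define U where "U s = Psi (hist_traj A B Psi (\<lambda>j. s ! j) x (length s - 1)) (rev s)" for s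
  have "tr A B U \<sigma> x k = phi A B k \<sigma> x Psi" for k \<sigma>
  proof (induction k)
    case 0 then show ?case by (simp add: phi_0)
  next
    case (Suc k)
    have h: "hist_traj A B Psi (\<lambda>j. map \<sigma> [0..<Suc k] ! j) x k = hist_traj A B Psi \<sigma> x k"
      by (rule hist_cong) (auto simp del: upt_Suc)
    have "U (map \<sigma> [0..<Suc k]) = Psi (hist_traj A B Psi \<sigma> x k) (map \<sigma> (rev [0..<Suc k]))"
      unfolding U_def using h by (simp add: rev_map del: upt_Suc)
    then show ?case using Suc by (simp add: phi_Suc del: upt_Suc)
  qed
  then show ?thesis by blast
qed

lemma V_enn_WW: "V_enn A B x = WW A B x"
proof (rule antisym)
  show "V_enn A B x \<le> WW A B x"
    unfolding WW_def
  proof (rule INF_greatest)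
    fix U
    have "V_enn A B x \<le> (SUP \<sigma>. \<Sum>k. ennreal (norm (phi A B k \<sigma> x (\<lambda>h s. U (rev s)))))"
      unfolding V_enn_def by (rule INF_lower) simp
    also have "\<dots> = JJ A B U x" unfolding JJ_def SS_def phi_from_U ..
    finally show "V_enn A B x \<le> JJ A B U x" .
  qed
  show "WW A B x \<le> V_enn A B x"
    unfolding V_enn_def
  proof (rule INF_greatest)
    fix Psi
    obtain U where U: "\<forall>k \<sigma>. tr A B U \<sigma> x k = phi A B k \<sigma> x Psi" using U_from_phi by blast
    have "WW A B x \<le> JJ A B U x" unfolding WW_def by (rule INF_lower) simp
    also have "\<dots> = (SUP \<sigma>. \<Sum>k. ennreal (norm (phi A B k \<sigma> x Psi)))" unfolding JJ_def SS_def by (simp only: U)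
    finally show "WW A B x \<le> (SUP \<sigma>. \<Sum>k. ennreal (norm (phi A B k \<sigma> x Psi)))" .
  qed
qed



lemma tr_lin: "tr A B (\<lambda>s. a *\<^sub>R U1 s + b *\<^sub>R U2 s) \<sigma> (a *\<^sub>R x + b *\<^sub>R y) k
   = a *\<^sub>R tr A B U1 \<sigma> x k + b *\<^sub>R tr A B U2 \<sigma> y k"
  by (induction k) (simp_all add: matrix_vector_right_distrib matrix_vector_mult_scaleR algebra_simps del: upt_Suc)

definition scons :: "'s \<Rightarrow> (nat \<Rightarrow> 's) \<Rightarrow> nat \<Rightarrow> 's" where
  "scons i \<sigma> j = (case j of 0 \<Rightarrow> i | Suc j \<Rightarrow> \<sigma> j)"

lemma scons_eta: "scons (\<sigma> 0) (\<lambda>j. \<sigma> (Suc j)) = \<sigma>"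
  by (rule ext) (simp add: scons_def split: nat.split)

lemma map_scons: "map (scons i \<sigma>) [0..<Suc n] = i # map \<sigma> [0..<n]"
proof -
  have "[0..<Suc n] = 0 # map Suc [0..<n]"
    by (simp add: upt_conv_Cons map_Suc_upt del: upt_Suc)
  then show ?thesis by (simp add: scons_def comp_def del: upt_Suc)
qed

lemma tr_scons: "tr A B U (scons i \<sigma>) x (Suc k) = tr A B (\<lambda>s. U (i # s)) \<sigma> (A i *v x + B i *v U [i]) k"
proof (induction k)
  case 0 then show ?case by (simp add: scons_def)
next
  case (Suc k)
  have "tr A B U (scons i \<sigma>) x (Suc (Suc k)) = A (\<sigma> k) *v tr A B U (scons i \<sigma>) x (Suc k)
      + B (\<sigma> k) *v U (i # map \<sigma> [0..<Suc k])"
    by (simp only: tr.simps map_scons) (simp add: scons_def)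
  then show ?case using Suc by (simp del: upt_Suc)
qed

lemma tr_cong: "(\<And>s. s \<noteq> [] \<Longrightarrow> U s = U' s) \<Longrightarrow> tr A B U \<sigma> x k = tr A B U' \<sigma> x k"
  by (induction k) (simp_all del: upt_Suc)

lemma ennreal_suminf_head: "(\<Sum>k. (f::nat\<Rightarrow>ennreal) k) = f 0 + (\<Sum>k. f (Suc k))"
  by (metis add.commute suminf_cong summableI summable_sums sums_Suc sums_unique)

lemma SS_split: "SS A B U \<sigma> x = ennreal (norm x)
   + SS A B (\<lambda>s. U (\<sigma> 0 # s)) (\<lambda>j. \<sigma> (Suc j)) (A (\<sigma> 0) *v x + B (\<sigma> 0) *v U [\<sigma> 0])"
proof -
  have "SS A B U \<sigma> x = SS A B U (scons (\<sigma> 0) (\<lambda>j. \<sigma> (Suc j))) x" by (simp only: scons_eta)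
  also have "\<dots> = ennreal (norm x)
   + SS A B (\<lambda>s. U (\<sigma> 0 # s)) (\<lambda>j. \<sigma> (Suc j)) (A (\<sigma> 0) *v x + B (\<sigma> 0) *v U [\<sigma> 0])"
    unfolding SS_def by (subst ennreal_suminf_head) (simp only: tr_scons tr.simps(1))
  finally show ?thesis .
qed

lemma SS_ge: "ennreal (norm x) \<le> SS A B U \<sigma> x"
  by (subst SS_split) simp

lemma JJ_ge: "SS A B U \<sigma> x \<le> JJ A B U x"
  unfolding JJ_def by (rule SUP_upper) simp

lemma WW_ge: "ennreal (norm x) \<le> WW A B x"
  unfolding WW_def by (rule INF_greatest) (metis SS_ge JJ_ge order_trans)

lemma WW_le_JJ: "WW A B x \<le> JJ A B U x"
  unfolding WW_def by (rule INF_lower) simp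

lemma WW_bound:
  assumes "DFS_m A B"
  obtains C where "C \<ge> 1" "\<And>x. WW A B x \<le> ennreal (C * norm x)"
proof -
  obtain Psi M \<gamma> where M: "M > 0" "0 \<le> \<gamma>" "\<gamma> < 1"
    and b: "\<And>x0 \<sigma> k. norm (phi A B k \<sigma> x0 Psi) \<le> M * \<gamma> ^ k * norm x0"
    using assms unfolding DFS_m_def by blast
  define C where "C = max 1 (M / (1 - \<gamma>))"
  have "WW A B x \<le> ennreal (C * norm x)" for x
  proof -
    obtain U where U: "\<forall>k \<sigma>. tr A B U \<sigma> x k = phi A B k \<sigma> x Psi" using U_from_phi by blast
    have sg: "summable (\<lambda>k. (M * norm x) * \<gamma> ^ k)"
      by (rule summable_mult) (rule summable_geometric, use M in simp)
    have "SS A B U \<sigma> x \<le> ennreal (C * norm x)" for \<sigma>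
    proof -
      have "SS A B U \<sigma> x \<le> (\<Sum>k. ennreal ((M * norm x) * \<gamma> ^ k))"
        unfolding SS_def
        by (rule suminf_le) (use b U in \<open>auto intro!: ennreal_leI simp: summableI mult.commute mult.left_commute\<close>)
      also have "\<dots> = ennreal (\<Sum>k. (M * norm x) * \<gamma> ^ k)"
        by (rule suminf_ennreal2) (use M sg in auto)
      also have "(\<Sum>k. (M * norm x) * \<gamma> ^ k) = (M * norm x) * (1 / (1 - \<gamma>))"
        by (subst suminf_mult[OF summable_geometric]) (use M in \<open>simp_all add: suminf_geometric\<close>)
      also have "\<dots> = (M / (1 - \<gamma>)) * norm x" by simp
      also have "\<dots> \<le> C * norm x"
        by (rule mult_right_mono) (auto simp: C_def)
      finally show ?thesis by (simp add: ennreal_leI)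
    qed
    then have "JJ A B U x \<le> ennreal (C * norm x)" unfolding JJ_def by (rule SUP_least)
    then show ?thesis using WW_le_JJ order_trans by blast
  qed
  then show ?thesis using that[of C] C_def by simp
qed



definition vv where "vv A B x = enn2real (WW A B x)"

lemma WW_eq: assumes "DFS_m A B" shows "WW A B x = ennreal (vv A B x)"
proof -
  obtain C where "\<And>x. WW A B x \<le> ennreal (C * norm x)" using WW_bound[OF assms] by blast
  then have "WW A B x < top" using ennreal_less_top le_less_trans by blast
  then have "WW A B x \<noteq> top" by simp
  then show ?thesis unfolding vv_def by (simp add: ennreal_enn2real_if)
qed

lemma vv_nonneg: "0 \<le> vv A B x" unfolding vv_def by simp

lemma vv_ge: assumes "DFS_m A B" shows "norm x \<le> vv A B x"
  using WW_ge[of x A B] WW_eq[OF assms] by (simp add: ennreal_le_iff vv_nonneg)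


lemma vv_bound: assumes "DFS_m A B" obtains C where "C \<ge> 1" "\<And>x. vv A B x \<le> C * norm x"
proof -
  obtain C where C: "C \<ge> 1" "\<And>x. WW A B x \<le> ennreal (C * norm x)" using WW_bound[OF assms] by blast
  have "vv A B x \<le> C * norm x" for x using C(2)[of x] WW_eq[OF assms] C(1)
    by (simp add: ennreal_le_iff)
  then show ?thesis using that C by blast
qed

lemma near_opt: assumes "DFS_m A B" "e > 0" shows "\<exists>U. JJ A B U x < ennreal (vv A B x + e)"
proof -
  have "WW A B x < ennreal (vv A B x + e)" using WW_eq[OF assms(1)] assms(2) vv_nonneg[of A B x]
    by (simp add: ennreal_lessI)
  then show ?thesis unfolding WW_def by (simp add: INF_less_iff)
qed

lemma eps_le: fixes p q K :: real assumes "K \<ge> 0" "\<And>e. e > 0 \<Longrightarrow> p \<le> q + K * e" shows "p \<le> q"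
proof (rule field_le_epsilon)
  fix d :: real assume d: "d > 0"
  have "d / (K + 1) > 0" using assms(1) d by simp
  then have "p \<le> q + K * (d / (K + 1))" using assms(2) by blast
  also have "K * (d / (K + 1)) \<le> d" using assms(1) d by (simp add: field_simps)
  finally show "p \<le> q + d" by simp
qed

lemma vv_lin: assumes "DFS_m A B"
  shows "vv A B (a *\<^sub>R x + b *\<^sub>R y) \<le> \<bar>a\<bar> * vv A B x + \<bar>b\<bar> * vv A B y"
proof (rule eps_le[of "\<bar>a\<bar> + \<bar>b\<bar>"])
  fix e :: real assume e: "e > 0"
  obtain U1 where U1: "JJ A B U1 x < ennreal (vv A B x + e)" using near_opt[OF assms e] by blast
  obtain U2 where U2: "JJ A B U2 y < ennreal (vv A B y + e)" using near_opt[OF assms e] by blast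
  define U where "U s = a *\<^sub>R U1 s + b *\<^sub>R U2 s" for s
  have "SS A B U \<sigma> (a *\<^sub>R x + b *\<^sub>R y) \<le> ennreal (\<bar>a\<bar> * (vv A B x + e) + \<bar>b\<bar> * (vv A B y + e))" for \<sigma>
  proof -
    have pt: "ennreal (norm (tr A B U \<sigma> (a *\<^sub>R x + b *\<^sub>R y) k))
        \<le> ennreal \<bar>a\<bar> * ennreal (norm (tr A B U1 \<sigma> x k)) + ennreal \<bar>b\<bar> * ennreal (norm (tr A B U2 \<sigma> y k))" for k
    proof -
      have "norm (tr A B U \<sigma> (a *\<^sub>R x + b *\<^sub>R y) k) \<le> \<bar>a\<bar> * norm (tr A B U1 \<sigma> x k) + \<bar>b\<bar> * norm (tr A B U2 \<sigma> y k)"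
        unfolding U_def tr_lin by (metis norm_scaleR norm_triangle_ineq)
      then have "ennreal (norm (tr A B U \<sigma> (a *\<^sub>R x + b *\<^sub>R y) k)) \<le> ennreal (\<bar>a\<bar> * norm (tr A B U1 \<sigma> x k) + \<bar>b\<bar> * norm (tr A B U2 \<sigma> y k))"
        by (rule ennreal_leI)
      also have "\<dots> = ennreal (\<bar>a\<bar> * norm (tr A B U1 \<sigma> x k)) + ennreal (\<bar>b\<bar> * norm (tr A B U2 \<sigma> y k))"
        by (rule ennreal_plus) simp_all
      also have "\<dots> = ennreal \<bar>a\<bar> * ennreal (norm (tr A B U1 \<sigma> x k)) + ennreal \<bar>b\<bar> * ennreal (norm (tr A B U2 \<sigma> y k))"
        by (simp add: ennreal_mult)
      finally show ?thesis .
    qed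
    have "SS A B U \<sigma> (a *\<^sub>R x + b *\<^sub>R y) \<le> (\<Sum>k. ennreal \<bar>a\<bar> * ennreal (norm (tr A B U1 \<sigma> x k)) + ennreal \<bar>b\<bar> * ennreal (norm (tr A B U2 \<sigma> y k)))"
      unfolding SS_def by (rule suminf_le[OF pt summableI summableI])
    also have "\<dots> = ennreal \<bar>a\<bar> * SS A B U1 \<sigma> x + ennreal \<bar>b\<bar> * SS A B U2 \<sigma> y"
      unfolding SS_def by (simp add: suminf_add[OF summableI summableI, symmetric])
    also have "\<dots> \<le> ennreal \<bar>a\<bar> * ennreal (vv A B x + e) + ennreal \<bar>b\<bar> * ennreal (vv A B y + e)"
      using U1 U2 JJ_ge[of A B U1 \<sigma> x] JJ_ge[of A B U2 \<sigma> y]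
      by (intro add_mono mult_left_mono) auto
    also have "\<dots> = ennreal (\<bar>a\<bar> * (vv A B x + e) + \<bar>b\<bar> * (vv A B y + e))"
    proof -
      have "ennreal \<bar>a\<bar> * ennreal (vv A B x + e) = ennreal (\<bar>a\<bar> * (vv A B x + e))"
        by (rule ennreal_mult[symmetric]) (use e vv_nonneg[of A B x] in auto)
      moreover have "ennreal \<bar>b\<bar> * ennreal (vv A B y + e) = ennreal (\<bar>b\<bar> * (vv A B y + e))"
        by (rule ennreal_mult[symmetric]) (use e vv_nonneg[of A B y] in auto)
      ultimately show ?thesis using e vv_nonneg[of A B x] vv_nonneg[of A B y] by (simp add: ennreal_plus)
    qed
    finally show ?thesis .
  qed
  then have "JJ A B U (a *\<^sub>R x + b *\<^sub>R y) \<le> ennreal (\<bar>a\<bar> * (vv A B x + e) + \<bar>b\<bar> * (vv A B y + e))"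
    unfolding JJ_def by (rule SUP_least)
  then have "WW A B (a *\<^sub>R x + b *\<^sub>R y) \<le> ennreal (\<bar>a\<bar> * (vv A B x + e) + \<bar>b\<bar> * (vv A B y + e))"
    using WW_le_JJ order_trans by blast
  then have "vv A B (a *\<^sub>R x + b *\<^sub>R y) \<le> \<bar>a\<bar> * (vv A B x + e) + \<bar>b\<bar> * (vv A B y + e)"
  proof -
    have R0: "0 \<le> \<bar>a\<bar> * (vv A B x + e) + \<bar>b\<bar> * (vv A B y + e)"
      using e vv_nonneg[of A B x] vv_nonneg[of A B y] by simp
    from \<open>WW A B (a *\<^sub>R x + b *\<^sub>R y) \<le> _\<close> show ?thesis
      unfolding WW_eq[OF assms] ennreal_le_iff[OF R0] .
  qed
  then show "vv A B (a *\<^sub>R x + b *\<^sub>R y) \<le> \<bar>a\<bar> * vv A B x + \<bar>b\<bar> * vv A B y + (\<bar>a\<bar> + \<bar>b\<bar>) * e"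
    by (simp add: algebra_simps)
qed simp



lemma vv_zero: assumes "DFS_m A B" shows "vv A B 0 = 0"
proof -
  obtain C where "\<And>x. vv A B x \<le> C * norm x" using vv_bound[OF assms] by blast
  then have "vv A B 0 \<le> 0" by (metis mult_zero_right norm_zero)
  then show ?thesis using vv_nonneg[of A B 0] by simp
qed

lemma vv_tri: assumes "DFS_m A B" shows "vv A B (x + y) \<le> vv A B x + vv A B y"
  using vv_lin[OF assms, of 1 x 1 y] by simp

lemma vv_scale_le: assumes "DFS_m A B" shows "vv A B (c *\<^sub>R x) \<le> \<bar>c\<bar> * vv A B x"
  using vv_lin[OF assms, of c x 0 0] by simp

lemma vv_scale: assumes "DFS_m A B" shows "vv A B (c *\<^sub>R x) = \<bar>c\<bar> * vv A B x"
proof (cases "c = 0")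
  case True then show ?thesis using vv_zero[OF assms] by simp
next
  case False
  have "vv A B x = vv A B ((1/c) *\<^sub>R (c *\<^sub>R x))" using False by simp
  also have "\<dots> \<le> \<bar>1/c\<bar> * vv A B (c *\<^sub>R x)" by (rule vv_scale_le[OF assms])
  finally have "\<bar>c\<bar> * vv A B x \<le> vv A B (c *\<^sub>R x)" using False
    by (simp add: field_simps)
  then show ?thesis using vv_scale_le[OF assms, of c x] by simp
qed

lemma vv_is_norm: assumes "DFS_m A B" shows "is_norm (vv A B)"
  unfolding is_norm_def
proof (intro conjI allI)
  fix x show "0 \<le> vv A B x" by (rule vv_nonneg)
  show "(vv A B x = 0) = (x = 0)"
    using vv_ge[OF assms, of x] vv_zero[OF assms] by auto
next
  fix c x show "vv A B (c *\<^sub>R x) = \<bar>c\<bar> * vv A B x" by (rule vv_scale[OF assms])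
next
  fix x y show "vv A B (x + y) \<le> vv A B x + vv A B y" by (rule vv_tri[OF assms])
qed

lemma vv_cont: assumes "DFS_m A B" shows "continuous_on UNIV (vv A B)"
proof -
  obtain C where C: "C \<ge> 1" "\<And>x. vv A B x \<le> C * norm x" using vv_bound[OF assms] by blast
  have "dist (vv A B x) (vv A B y) \<le> C * dist x y" for x y
  proof -
    have "vv A B x \<le> vv A B (x - y) + vv A B y" using vv_tri[OF assms, of "x - y" y] by simp
    moreover have "vv A B y \<le> vv A B (y - x) + vv A B x" using vv_tri[OF assms, of "y - x" x] by simp
    moreover have "vv A B (x - y) \<le> C * dist x y" using C(2)[of "x - y"] by (simp add: dist_norm)
    moreover have "vv A B (y - x) \<le> C * dist x y" using C(2)[of "y - x"] by (simp add: dist_norm norm_minus_commute)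
    ultimately show ?thesis by (simp add: dist_real_def abs_le_iff)
  qed
  then have "C-lipschitz_on UNIV (vv A B)" by (intro lipschitz_onI) (use C in auto)
  then show ?thesis by (rule lipschitz_on_continuous_on)
qed

lemma argmin_exists:
  fixes f :: "real^'n \<Rightarrow> real" and L :: "real^'m^'n"
  assumes cont: "continuous_on UNIV f" and lower: "\<And>y. norm y \<le> f y"
  shows "\<exists>u. \<forall>w. f (c + L *v u) \<le> f (c + L *v w)"
proof -
  define S where "S = (+) c ` range ((*v) L)"
  have "subspace (range ((*v) L))"
    by (rule linear_subspace_image) (simp_all add: matrix_vector_mul_linear subspace_UNIV)
  then have "closed (range ((*v) L))" by (rule closed_subspace)
  then have clS: "closed S" unfolding S_def by (rule closed_translation)
  define K where "K = S \<inter> cball 0 (f c)"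
  have cK: "compact K" unfolding K_def by (rule closed_Int_compact[OF clS compact_cball])
  have "0 \<in> range ((*v) L)" by (rule range_eqI[of _ _ 0]) simp
  then have cS: "c \<in> S" unfolding S_def by (rule rev_image_eqI) simp
  have cinK: "c \<in> K" unfolding K_def using cS lower[of c] by simp
  obtain y where y: "y \<in> K" "\<And>z. z \<in> K \<Longrightarrow> f y \<le> f z"
    using continuous_attains_inf[OF cK _ continuous_on_subset[OF cont]] cinK by blast
  obtain u where u: "y = c + L *v u" using y(1) unfolding K_def S_def by auto
  have "f (c + L *v u) \<le> f (c + L *v w)" for w
  proof (cases "c + L *v w \<in> K")
    case True then show ?thesis using y u by simp
  next
    case False
    then have "norm (c + L *v w) > f c" unfolding K_def S_def by auto
    then show ?thesis using lower[of "c + L *v w"] y(2)[OF cinK] u by simp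
  qed
  then show ?thesis by blast
qed



definition mm where "mm A B i x = (INF u. vv A B (A i *v x + B i *v u))"

lemma mm_lower: "mm A B i x \<le> vv A B (A i *v x + B i *v w)"
  unfolding mm_def by (rule cINF_lower) (auto intro: bdd_belowI[of _ 0] simp: vv_nonneg)

lemma mm_nonneg: "0 \<le> mm A B i x"
  unfolding mm_def by (rule cINF_greatest) (auto simp: vv_nonneg)

lemma mm_attained: assumes "DFS_m A B"
  shows "\<exists>u. vv A B (A i *v x + B i *v u) = mm A B i x \<and> (\<forall>w. vv A B (A i *v x + B i *v u) \<le> vv A B (A i *v x + B i *v w))"
proof -
  obtain u where u: "\<forall>w. vv A B (A i *v x + B i *v u) \<le> vv A B (A i *v x + B i *v w)"
    using argmin_exists[OF vv_cont[OF assms] vv_ge[OF assms]] by blast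
  have "mm A B i x \<ge> vv A B (A i *v x + B i *v u)"
    unfolding mm_def by (rule cINF_greatest) (use u in auto)
  then show ?thesis using u mm_lower[of A B i x u] by auto
qed

lemma scons_tail: "(\<lambda>j. scons i \<sigma> (Suc j)) = \<sigma>"
  by (simp add: scons_def)

lemma bell_ge: assumes "DFS_m A B" shows "norm x + mm A B i x \<le> vv A B x"
proof -
  have "ennreal (norm x + mm A B i x) \<le> JJ A B U x" for U
  proof -
    define Ui where "Ui = (\<lambda>s. U (i # s))"
    define x1 where "x1 = A i *v x + B i *v U [i]"
    have "ennreal (norm x) + SS A B Ui \<sigma>' x1 \<le> JJ A B U x" for \<sigma>'
    proof -
      have "SS A B U (scons i \<sigma>') x = ennreal (norm x) + SS A B Ui \<sigma>' x1"
        by (subst SS_split) (simp add: scons_tail Ui_def x1_def, simp add: scons_def)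
      then show ?thesis using JJ_ge[of A B U "scons i \<sigma>'" x] by simp
    qed
    then have "ennreal (norm x) + JJ A B Ui x1 \<le> JJ A B U x"
      unfolding JJ_def by (subst ennreal_SUP_add_right) (auto intro: SUP_least)
    moreover have "ennreal (mm A B i x) \<le> JJ A B Ui x1"
    proof -
      have "ennreal (mm A B i x) \<le> ennreal (vv A B x1)" unfolding x1_def by (rule ennreal_leI, rule mm_lower)
      also have "\<dots> = WW A B x1" using WW_eq[OF assms] by simp
      also have "\<dots> \<le> JJ A B Ui x1" by (rule WW_le_JJ)
      finally show ?thesis .
    qed
    ultimately have "ennreal (norm x) + ennreal (mm A B i x) \<le> JJ A B U x"
      by (meson add_left_mono order_trans)
    moreover have "ennreal (norm x + mm A B i x) = ennreal (norm x) + ennreal (mm A B i x)"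
      by (rule ennreal_plus) (simp_all add: mm_nonneg)
    ultimately show ?thesis by simp
  qed
  then have "ennreal (norm x + mm A B i x) \<le> WW A B x" unfolding WW_def by (rule INF_greatest)
  then show ?thesis unfolding WW_eq[OF assms] using vv_nonneg[of A B x] by (simp add: ennreal_le_iff)
qed

lemma finite_rng: "finite (range (f :: 's::finite \<Rightarrow> real))" by simp

lemma bell_le: assumes "DFS_m A B"
  shows "vv A B x \<le> norm x + Max (range (\<lambda>i::'s::finite. mm A B i x))"
proof (rule eps_le[of 1])
  fix e :: real assume e: "e > 0"
  let ?Mx = "Max (range (\<lambda>i::'s. mm A B i x))"
  have Mge: "mm A B i x \<le> ?Mx" for i by (rule Max_ge) simp_all
  have M0: "0 \<le> ?Mx" using mm_nonneg[of A B undefined x] Mge[of undefined] by linarith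
  have "\<forall>i. \<exists>u. vv A B (A i *v x + B i *v u) = mm A B i x" using mm_attained[OF assms] by blast
  then obtain u where u: "\<And>i. vv A B (A i *v x + B i *v u i) = mm A B i x" by metis
  have exV: "\<forall>i. \<exists>V. JJ A B V (A i *v x + B i *v u i) < ennreal (vv A B (A i *v x + B i *v u i) + e)"
    using near_opt[OF assms e] by blast
  obtain UU where UU0: "\<forall>i. JJ A B (UU i) (A i *v x + B i *v u i) < ennreal (vv A B (A i *v x + B i *v u i) + e)"
    using choice[OF exV] by blast
  have UU: "JJ A B (UU i) (A i *v x + B i *v u i) < ennreal (mm A B i x + e)" for i
    using UU0 u by simp
  define U where "U s = (case s of [] \<Rightarrow> 0 | i # s' \<Rightarrow> (if s' = [] then u i else UU i s'))" for s
  have "SS A B U \<sigma> x \<le> ennreal (norm x + ?Mx + e)" for \<sigma>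
  proof -
    let ?i = "\<sigma> 0"
    let ?x1 = "A ?i *v x + B ?i *v u ?i"
    have e1: "SS A B U \<sigma> x = ennreal (norm x) + SS A B (\<lambda>s. U (?i # s)) (\<lambda>j. \<sigma> (Suc j)) ?x1"
      by (subst SS_split) (simp add: U_def)
    have "SS A B (\<lambda>s. U (?i # s)) (\<lambda>j. \<sigma> (Suc j)) ?x1 = SS A B (UU ?i) (\<lambda>j. \<sigma> (Suc j)) ?x1"
      unfolding SS_def by (subst tr_cong[of "\<lambda>s. U (?i # s)" "UU ?i"]) (simp_all add: U_def)
    also have "\<dots> \<le> JJ A B (UU ?i) ?x1" by (rule JJ_ge)
    also have "\<dots> \<le> ennreal (mm A B ?i x + e)" using UU[of ?i] by (rule less_imp_le)
    also have "\<dots> \<le> ennreal (?Mx + e)" using Mge[of ?i] by (intro ennreal_leI) simp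
    finally have "SS A B U \<sigma> x \<le> ennreal (norm x) + ennreal (?Mx + e)"
      unfolding e1 by (rule add_left_mono)
    also have "\<dots> = ennreal (norm x + (?Mx + e))"
      using e M0 by (intro ennreal_plus[symmetric]) simp_all
    finally show ?thesis by (simp add: add.assoc)
  qed
  then have "JJ A B U x \<le> ennreal (norm x + ?Mx + e)" unfolding JJ_def by (rule SUP_least)
  then have "WW A B x \<le> ennreal (norm x + ?Mx + e)" using WW_le_JJ order_trans by blast
  moreover have "0 \<le> norm x + ?Mx + e" using e M0 by simp
  ultimately show "vv A B x \<le> norm x + ?Mx + 1 * e"
    unfolding WW_eq[OF assms] by (simp only: ennreal_le_iff mult_1)
qed simp



lemma V_vv: "V A B = vv A B"
  by (rule ext) (simp add: V_def vv_def V_enn_WW)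

lemma lyap: assumes "DFS_m A B" "C \<ge> 1" "\<And>x. vv A B x \<le> C * norm x"
  and am: "is_arg_min (\<lambda>u. vv A B (A i *v x + B i *v u)) (\<lambda>_. True) p"
  shows "vv A B (A i *v x + B i *v p) \<le> (1 - 1 / C) * vv A B x"
proof -
  have "vv A B (A i *v x + B i *v p) \<le> vv A B (A i *v x + B i *v w)" for w
    using am unfolding is_arg_min_def by (simp add: not_less)
  then have "vv A B (A i *v x + B i *v p) \<le> mm A B i x"
    using mm_attained[OF assms(1), of i x] by metis
  also have "\<dots> \<le> vv A B x - norm x" using bell_ge[OF assms(1), of x i] by simp
  also have "\<dots> \<le> vv A B x - vv A B x / C"
    using assms(2) assms(3)[of x] by (simp add: field_simps)
  also have "\<dots> = (1 - 1 / C) * vv A B x" by (simp add: field_simps)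
  finally show ?thesis .
qed

theorem mainTheorem6:
  fixes A :: "'s::finite \<Rightarrow> real^'n^'n" and B :: "'s \<Rightarrow> real^'m^'n"
  assumes "DFS_m A B"
  shows "(\<forall>x. V_enn A B x < \<infinity>)
    \<and> is_norm (V A B)
    \<and> (\<forall>x i. \<exists>u. is_arg_min (\<lambda>v. V A B (A i *v x + B i *v v)) (\<lambda>_. True) u)
    \<and> (\<forall>x. V A B x = norm x + Max (range (\<lambda>i. INF u. V A B (A i *v x + B i *v u))))
    \<and> (\<forall>Phi. (\<forall>i x. is_arg_min (\<lambda>u. V A B (A i *v x + B i *v u)) (\<lambda>_. True) (Phi i x))
         \<longrightarrow> UES A B Phi
           \<and> (\<exists>\<gamma>. 0 \<le> \<gamma> \<and> \<gamma> < 1 \<and>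
                (\<forall>i x. V A B (A i *v x + B i *v Phi i x) \<le> \<gamma> * V A B x)))"
proof (intro conjI allI impI)
  fix x show "V_enn A B x < \<infinity>"
    unfolding V_enn_WW WW_eq[OF assms] by simp
next
  show "is_norm (V A B)" unfolding V_vv by (rule vv_is_norm[OF assms])
next
  fix x i
  show "\<exists>u. is_arg_min (\<lambda>v. V A B (A i *v x + B i *v v)) (\<lambda>_. True) u"
    using mm_attained[OF assms, of i x] unfolding V_vv is_arg_min_def by (auto simp: not_less)
next
  fix x :: "real^'n"
  have mmV: "(\<lambda>i. INF u. V A B (A i *v x + B i *v u)) = (\<lambda>i. mm A B i x)"
    unfolding V_vv mm_def ..
  have "Max (range (\<lambda>i. mm A B i x)) \<in> range (\<lambda>i. mm A B i x)" by (rule Max_in) simp_all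
  then obtain i0 where i0: "Max (range (\<lambda>i. mm A B i x)) = mm A B i0 x" by (elim rangeE) (rule that)
  show "V A B x = norm x + Max (range (\<lambda>i. INF u. V A B (A i *v x + B i *v u)))"
    unfolding mmV unfolding V_vv using bell_le[OF assms, of x] bell_ge[OF assms, of x i0] i0 by simp
next
  fix Phi assume am: "\<forall>i x. is_arg_min (\<lambda>u. V A B (A i *v x + B i *v u)) (\<lambda>_. True) (Phi i x)"
  obtain C where C: "C \<ge> 1" "\<And>x. vv A B x \<le> C * norm x" using vv_bound[OF assms] by blast
  have ly: "vv A B (A i *v x + B i *v Phi i x) \<le> (1 - 1 / C) * vv A B x" for i x
    by (rule lyap[OF assms C]) (use am in \<open>simp add: V_vv\<close>)
  have g0: "0 \<le> 1 - 1 / C" "1 - 1 / C < 1" using C(1) by (simp_all add: field_simps)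
  show "\<exists>\<gamma>\<ge>0. \<gamma> < 1 \<and> (\<forall>i x. V A B (A i *v x + B i *v Phi i x) \<le> \<gamma> * V A B x)"
    using ly g0 unfolding V_vv by blast
  have tr_dec: "vv A B (cl_traj A B Phi \<sigma> x0 k) \<le> (1 - 1 / C) ^ k * vv A B x0" for \<sigma> x0 k
  proof (induction k)
    case 0 then show ?case by simp
  next
    case (Suc k)
    have "vv A B (cl_traj A B Phi \<sigma> x0 (Suc k)) \<le> (1 - 1 / C) * vv A B (cl_traj A B Phi \<sigma> x0 k)"
      using ly by simp
    also have "\<dots> \<le> (1 - 1 / C) * ((1 - 1 / C) ^ k * vv A B x0)"
      by (rule mult_left_mono[OF Suc g0(1)])
    finally show ?case by simp
  qed
  have "norm (cl_traj A B Phi \<sigma> x0 k) \<le> C * (1 - 1 / C) ^ k * norm x0" for \<sigma> x0 k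
  proof -
    have "norm (cl_traj A B Phi \<sigma> x0 k) \<le> vv A B (cl_traj A B Phi \<sigma> x0 k)" by (rule vv_ge[OF assms])
    also have "\<dots> \<le> (1 - 1 / C) ^ k * vv A B x0" by (rule tr_dec)
    also have "\<dots> \<le> (1 - 1 / C) ^ k * (C * norm x0)"
      by (rule mult_left_mono[OF C(2)]) (use g0 in simp)
    finally show ?thesis by (simp add: mult_ac)
  qed
  then show "UES A B Phi" unfolding UES_def using C(1) g0
    by (intro exI[of _ C] exI[of _ "1 - 1 / C"]) auto
qed

end
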